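(* Let $n\ge2$ and $p,u,v\in\mathbb R^{n-1}$, and let $P:\mathbb R^n\to\mathbb R^{n-1}$ be the projection onto the first $n-1$ coordinates. Then there exist $a,b\in\mathbb R^n$ such that the lens $L=B(a,1)\cap B(b,1)$ can be written as $L=\{(x,z): x\in P(L),\ f(x)\le z\le g(x)\}$ for a convex function $f$ and a concave function $g$ on $P(L)$, with $p$ in the interior of $P(L)$, $f,g$ differentiable at $p$, $\nabla f(p)=u$ and $\nabla g(p)=v$.
   Context: For $a\in\mathbb R^n$, $B(a,1)$ is the closed Euclidean unit ball centered at $a$. A lens is an intersection of two closed Euclidean unit balls. *)

theory Defs
  imports "HOL-Analysis.Analysis"
begin

end

theory Submission
  imports Defs
begin

lemma lens_convex_generic:
  fixes L :: "('a::real_vector \<times> real) set"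
  assumes cL: "convex L"
    and eq: "L = {(x, z). x \<in> fst ` L \<and> f x \<le> z \<and> z \<le> g x}"
  shows "convex_on (fst ` L) f \<and> concave_on (fst ` L) g"
proof -
  have cP: "convex (fst ` L)" using cL by (simp add: convex_linear_image linear_fst)
  have mem: "(x, z) \<in> L \<longleftrightarrow> x \<in> fst ` L \<and> f x \<le> z \<and> z \<le> g x" for x z
    using eq by blast
  have fg: "f x \<le> g x" if "x \<in> fst ` L" for x
    using that mem by force
  have lo: "(x, f x) \<in> L" and hi: "(x, g x) \<in> L" if "x \<in> fst ` L" for x
    using that fg mem by auto
  have comb: "(s *\<^sub>R x + t *\<^sub>R y, s * zx + t * zy) \<in> L"
    if "(x, zx) \<in> L" "(y, zy) \<in> L" "s \<ge> 0" "t \<ge> 0" "s + t = 1" for x y zx zy s t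
  proof -
    have "s *\<^sub>R (x, zx) + t *\<^sub>R (y, zy) \<in> L"
      using cL that unfolding convex_def by blast
    then show ?thesis by simp
  qed
  have "convex_on (fst ` L) f"
    unfolding convex_on_def
  proof (intro conjI cP ballI allI impI)
    fix x y s t assume h: "x \<in> fst ` L" "y \<in> fst ` L" "(0::real) \<le> s" "0 \<le> t" "s + t = 1"
    have "(s *\<^sub>R x + t *\<^sub>R y, s * f x + t * f y) \<in> L"
      using comb[OF lo[OF h(1)] lo[OF h(2)] h(3-5)] .
    then show "f (s *\<^sub>R x + t *\<^sub>R y) \<le> s * f x + t * f y" using mem by blast
  qed
  moreover have "concave_on (fst ` L) g"
    unfolding concave_on_def convex_on_def
  proof (intro conjI cP ballI allI impI)
    fix x y s t assume h: "x \<in> fst ` L" "y \<in> fst ` L" "(0::real) \<le> s" "0 \<le> t" "s + t = 1"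
    have "(s *\<^sub>R x + t *\<^sub>R y, s * g x + t * g y) \<in> L"
      using comb[OF hi[OF h(1)] hi[OF h(2)] h(3-5)] .
    then show "- g (s *\<^sub>R x + t *\<^sub>R y) \<le> s * - g x + t * - g y" using mem by auto
  qed
  ultimately show ?thesis ..
qed

definition sf :: "'a::real_inner \<Rightarrow> 'a \<Rightarrow> real" where
  "sf c x = sqrt (1 - (x - c) \<bullet> (x - c))"

lemma mem_cball_pair:
  fixes c x :: "'a::real_inner" and cz z :: real
  shows "(x, z) \<in> cball (c, cz) 1 \<longleftrightarrow> (x - c) \<bullet> (x - c) \<le> 1 \<and> cz - sf c x \<le> z \<and> z \<le> cz + sf c x"
proof -
  have d: "dist (c, cz) (x, z) = sqrt ((x - c) \<bullet> (x - c) + (z - cz)^2)"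
  proof -
    have "dist (c, cz) (x, z) = sqrt ((norm (x - c))^2 + (z - cz)^2)"
      by (simp add: dist_Pair_Pair dist_norm dist_real_def norm_minus_commute power2_commute norm_Pair)
    then show ?thesis by (simp add: power2_norm_eq_inner)
  qed
  have "(x, z) \<in> cball (c, cz) 1 \<longleftrightarrow> (z - cz)^2 \<le> 1 - (x - c) \<bullet> (x - c)"
    unfolding mem_cball d by (simp, linarith)
  also have "\<dots> \<longleftrightarrow> (x - c) \<bullet> (x - c) \<le> 1 \<and> \<bar>z - cz\<bar> \<le> sf c x"
    unfolding sf_def
    by (smt (verit, ccfv_SIG) abs_le_square_iff power2_eq_square real_sqrt_abs real_sqrt_ge_0_iff real_sqrt_le_mono real_sqrt_pow2 zero_le_power2)
  finally show ?thesis by auto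
qed

lemma sf_deriv:
  fixes c p :: "'a::real_inner"
  assumes "(p - c) \<bullet> (p - c) < 1"
  shows "(sf c has_derivative (\<lambda>k. - ((p - c) \<bullet> k) / sf c p)) (at p)"
proof -
  have d0: "((\<lambda>x. (x - c) \<bullet> (x - c)) has_derivative (\<lambda>k. (p - c) \<bullet> k + k \<bullet> (p - c))) (at p)"
  proof -
    have di: "((\<lambda>x. x - c) has_derivative (\<lambda>h. h)) (at p)"
      using has_derivative_diff[OF has_derivative_ident has_derivative_const[of c]] by simp
    show ?thesis using has_derivative_inner[OF di di] by simp
  qed
  have d1: "((\<lambda>x. 1 - (x - c) \<bullet> (x - c)) has_derivative (\<lambda>k. - 2 * ((p - c) \<bullet> k))) (at p)"
    using has_derivative_diff[OF has_derivative_const[of 1] d0]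
    by (simp add: inner_commute)
  show ?thesis unfolding sf_def
    apply (rule has_derivative_eq_rhs[OF has_derivative_real_sqrt[OF _ d1]])
    using assms apply simp
    apply (rule ext)
    apply (simp add: field_simps)
    done
qed

lemma unit_facts:
  fixes w :: "'a::real_inner"
  defines "\<gamma> \<equiv> 1 / sqrt (1 + w \<bullet> w)"
  shows "\<gamma> > 0" "\<gamma> \<le> 1" "(\<gamma> *\<^sub>R w) \<bullet> (\<gamma> *\<^sub>R w) = 1 - \<gamma>^2" "\<gamma>^2 > 0"
proof -
  have w0: "w \<bullet> w \<ge> 0" by simp
  have s1: "sqrt (1 + w \<bullet> w) \<ge> 1" using w0 by simp
  show g0: "\<gamma> > 0" unfolding \<gamma>_def using s1 by (simp add: add_pos_nonneg)
  show "\<gamma> \<le> 1" unfolding \<gamma>_def using s1 by (auto simp: divide_le_eq)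
  have w1: "0 < 1 + w \<bullet> w" using w0 by linarith
  have "\<gamma>^2 = 1 / (1 + w \<bullet> w)" unfolding \<gamma>_def using w0
    by (simp add: power_divide)
  then have "\<gamma>^2 * (1 + w \<bullet> w) = 1" using w1 by (simp add: field_simps)
  then show "(\<gamma> *\<^sub>R w) \<bullet> (\<gamma> *\<^sub>R w) = 1 - \<gamma>^2"
    by (simp add: power2_eq_square algebra_simps)
  show "\<gamma>^2 > 0" using g0 by simp
qed

theorem lemma4p6:
  fixes p u v :: "real ^ 'm"
  shows "\<exists>(a :: (real ^ 'm) \<times> real) (b :: (real ^ 'm) \<times> real)
           (f :: real ^ 'm \<Rightarrow> real) (g :: real ^ 'm \<Rightarrow> real).
           (let L = cball a 1 \<inter> cball b 1 in
              L = {(x, z). x \<in> fst ` L \<and> f x \<le> z \<and> z \<le> g x}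
            \<and> convex_on (fst ` L) f
            \<and> concave_on (fst ` L) g
            \<and> p \<in> interior (fst ` L)
            \<and> (f has_derivative (\<lambda>h. u \<bullet> h)) (at p)
            \<and> (g has_derivative (\<lambda>h. v \<bullet> h)) (at p))"
proof -
  define \<alpha> where "\<alpha> = 1 / sqrt (1 + v \<bullet> v)"
  define \<beta> where "\<beta> = 1 / sqrt (1 + u \<bullet> u)"
  define ax where "ax = p + \<alpha> *\<^sub>R v"
  define bx where "bx = p - \<beta> *\<^sub>R u"
  define h where "h = max \<alpha> \<beta>"
  define f where "f x = max (- sf ax x) (h - sf bx x)" for x
  define g where "g x = min (sf ax x) (h + sf bx x)" for x
  define L where "L = cball (ax, 0::real) 1 \<inter> cball (bx, h) 1"
  note ua = unit_facts[of v, folded \<alpha>_def]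
  note ub = unit_facts[of u, folded \<beta>_def]
  have qa: "(p - ax) \<bullet> (p - ax) = 1 - \<alpha>^2" using ua(3) unfolding ax_def by simp
  have qb: "(p - bx) \<bullet> (p - bx) = 1 - \<beta>^2" using ub(3) unfolding bx_def by simp
  have sa: "sf ax p = \<alpha>" unfolding sf_def qa using ua(1) by simp
  have sb: "sf bx p = \<beta>" unfolding sf_def qb using ub(1) by simp
  have memL: "(x, z) \<in> L \<longleftrightarrow> (x - ax) \<bullet> (x - ax) \<le> 1 \<and> (x - bx) \<bullet> (x - bx) \<le> 1 \<and> f x \<le> z \<and> z \<le> g x" for x z
    unfolding L_def f_def g_def Int_iff mem_cball_pair by auto
  have eq: "L = {(x, z). x \<in> fst ` L \<and> f x \<le> z \<and> z \<le> g x}"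
  proof (intro set_eqI iffI)
    fix xz assume "xz \<in> L" then show "xz \<in> {(x, z). x \<in> fst ` L \<and> f x \<le> z \<and> z \<le> g x}"
      using memL by (cases xz) force
  next
    fix xz assume "xz \<in> {(x, z). x \<in> fst ` L \<and> f x \<le> z \<and> z \<le> g x}"
    then show "xz \<in> L" using memL by (cases xz) force
  qed
  have cL: "convex L" unfolding L_def by (simp add: convex_Int)
  have cfg: "convex_on (fst ` L) f \<and> concave_on (fst ` L) g"
    by (rule lens_convex_generic[OF cL eq])
  define U where "U = {x. - sf ax x < h - sf bx x} \<inter> {x. h - sf bx x < sf ax x}
     \<inter> {x. sf ax x < h + sf bx x} \<inter> {x. (x - ax) \<bullet> (x - ax) < 1} \<inter> {x. (x - bx) \<bullet> (x - bx) < 1}"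
  have oU: "open U" unfolding U_def sf_def
    by (intro open_Int open_Collect_less continuous_intros)
  have pU: "p \<in> U" unfolding U_def using sa sb qa qb ua ub unfolding h_def by auto
  have fU: "f x = h - sf bx x" and gU: "g x = sf ax x" if "x \<in> U" for x
    using that unfolding U_def f_def g_def by auto
  have UL: "U \<subseteq> fst ` L"
  proof
    fix x assume xU: "x \<in> U"
    have "(x, h - sf bx x) \<in> L" unfolding memL using xU fU[OF xU] gU[OF xU]
      unfolding U_def by auto
    then show "x \<in> fst ` L" by force
  qed
  have pint: "p \<in> interior (fst ` L)"
    using interior_maximal[OF UL oU] pU by blast
  have dB: "(sf bx has_derivative (\<lambda>k. - (u \<bullet> k))) (at p)"
  proof -
    have "(sf bx has_derivative (\<lambda>k. - ((p - bx) \<bullet> k) / sf bx p)) (at p)"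
      by (rule sf_deriv) (use qb ub in simp)
    moreover have "(\<lambda>k. - ((p - bx) \<bullet> k) / sf bx p) = (\<lambda>k. - (u \<bullet> k))"
    proof -
      have "p - bx = \<beta> *\<^sub>R u" by (simp add: bx_def)
      then show ?thesis using sb ub(1) by auto
    qed
    ultimately show ?thesis by simp
  qed
  have dA: "(sf ax has_derivative (\<lambda>k. v \<bullet> k)) (at p)"
  proof -
    have "(sf ax has_derivative (\<lambda>k. - ((p - ax) \<bullet> k) / sf ax p)) (at p)"
      by (rule sf_deriv) (use qa ua in simp)
    moreover have "(\<lambda>k. - ((p - ax) \<bullet> k) / sf ax p) = (\<lambda>k. v \<bullet> k)"
    proof -
      have "p - ax = - (\<alpha> *\<^sub>R v)" by (simp add: ax_def)
      then show ?thesis using sa ua(1) by auto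
    qed
    ultimately show ?thesis by simp
  qed
  have df: "(f has_derivative (\<lambda>k. u \<bullet> k)) (at p)"
  proof -
    have "((\<lambda>x. h - sf bx x) has_derivative (\<lambda>k. u \<bullet> k)) (at p)"
      using has_derivative_diff[OF has_derivative_const[of h] dB] by simp
    then show ?thesis
      by (rule has_derivative_transform_within_open[OF _ oU pU]) (simp add: fU)
  qed
  have dg: "(g has_derivative (\<lambda>k. v \<bullet> k)) (at p)"
    by (rule has_derivative_transform_within_open[OF dA oU pU]) (simp add: gU)
  show ?thesis
    apply (rule exI[of _ "(ax, 0)"], rule exI[of _ "(bx, h)"], rule exI[of _ f], rule exI[of _ g])
    unfolding Let_def L_def[symmetric]
    using eq cfg pint df dg by blast
qed

end
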